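(* Let $D\ge1$, $V\in\mathbb{R}^{d_y\times d_x}$, and $\Sigma\in\mathbb{R}^{d_x\times d_x}$ positive definite. Let $V\Sigma^{1/2}=\hat L\hat S\hat R$ be a compact singular value decomposition with $\hat S\in\mathbb{R}^{r\times r}$ diagonal positive, $r=\mathrm{rank}(V\Sigma^{1/2})$. Consider matrices $W_k\in\mathbb{R}^{d_k\times d_{k-1}}$, $k=1,\dots,D$, with $d_0=d_x$, $d_D=d_y$ and $d_k\ge r$ for all $k$, and define, with $A_k:=W_D\cdots W_{k+1}$ ($A_D=I_{d_y}$) and $B_k:=W_{k-1}\cdots W_1$ ($B_1=I_{d_x}$), $$T(W_1,\dots,W_D)=\sum_{k=1}^D\mathrm{Tr}[A_k^TA_k]\,\mathrm{Tr}[B_k\Sigma B_k^T]$$ (equivalently $d_y\mathrm{Tr}[W_{D-1}\cdots W_1\Sigma W_1^T\cdots W_{D-1}^T]+\mathrm{Tr}[W_D^TW_D]\mathrm{Tr}[W_{D-2}\cdots W_1\Sigma W_1^T\cdots W_{D-2}^T]+\dots+\mathrm{Tr}[W_2^T\cdots W_D^TW_D\cdots W_2]\mathrm{Tr}[\Sigma]$). Then, under the constraint $W_D\cdots W_1=V$, $$\min T(W_1,\dots,W_D)=D(\mathrm{Tr}\hat S)^{2(D-1)/D}(d_y\mathrm{Tr}\Sigma)^{1/D},$$ and the minimum is achieved by $$W_D=(\mathrm{Tr}\hat S)^{-\frac{D-2}{2D}}d_y^{\frac{D-1}{2D}}(\mathrm{Tr}\Sigma)^{-\frac1{2D}}\hat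 L\hat S^{1/2}U_{D-1}^T,\quad W_k=(\mathrm{Tr}\hat S)^{\frac1D}(d_y\mathrm{Tr}\Sigma)^{-\frac1{2D}}U_kU_{k-1}^T\ (2\le k\le D-1),$$ $$W_1\Sigma^{1/2}=(\mathrm{Tr}\hat S)^{-\frac{D-2}{2D}}d_y^{-\frac1{2D}}(\mathrm{Tr}\Sigma)^{\frac{D-1}{2D}}U_1\hat S^{1/2}\hat R,$$ for arbitrary $U_i\in\mathbb{R}^{d_i\times r}$ with $U_i^TU_i=I_r$, $i=1,\dots,D-1$.
   Context: $\mathrm{Tr}\hat S$ is the nuclear norm of $V\Sigma^{1/2}$. *)

theory Defs
  imports "Jordan_Normal_Form.DL_Rank"
begin

definition mtrace :: "real mat \<Rightarrow> real" where
  "mtrace M = (\<Sum>i<dim_row M. M $$ (i, i))"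

definition pos_def_mat :: "nat \<Rightarrow> real mat \<Rightarrow> bool" where
  "pos_def_mat n M \<longleftrightarrow> M \<in> carrier_mat n n \<and> M\<^sup>T = M \<and>
     (\<forall>x \<in> carrier_vec n. x \<noteq> 0\<^sub>v n \<longrightarrow> x \<bullet> (M *\<^sub>v x) > 0)"

primrec chain :: "(nat \<Rightarrow> real mat) \<Rightarrow> (nat \<Rightarrow> nat) \<Rightarrow> nat \<Rightarrow> nat \<Rightarrow> real mat" where
  "chain W d a 0 = 1\<^sub>m (d a)"
| "chain W d a (Suc n) = W (a + Suc n) * chain W d a n"

text \<open>A_k = W_D ... W_(k+1) and B_k = W_(k-1) ... W_1.\<close>
definition Amat :: "nat \<Rightarrow> (nat \<Rightarrow> real mat) \<Rightarrow> (nat \<Rightarrow> nat) \<Rightarrow> nat \<Rightarrow> real mat" where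
  "Amat D W d k = chain W d k (D - k)"

definition Bmat :: "(nat \<Rightarrow> real mat) \<Rightarrow> (nat \<Rightarrow> nat) \<Rightarrow> nat \<Rightarrow> real mat" where
  "Bmat W d k = chain W d 0 (k - 1)"

definition Tobj :: "nat \<Rightarrow> real mat \<Rightarrow> (nat \<Rightarrow> real mat) \<Rightarrow> (nat \<Rightarrow> nat) \<Rightarrow> real" where
  "Tobj D Sig W d = (\<Sum>k=1..D. mtrace ((Amat D W d k)\<^sup>T * Amat D W d k)
                                  * mtrace (Bmat W d k * Sig * (Bmat W d k)\<^sup>T))"

definition feasible :: "nat \<Rightarrow> nat \<Rightarrow> nat \<Rightarrow> nat \<Rightarrow> real mat \<Rightarrow> (nat \<Rightarrow> real mat) \<Rightarrow> (nat \<Rightarrow> nat) \<Rightarrow> bool" where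
  "feasible D dx dy r V W d \<longleftrightarrow> d 0 = dx \<and> d D = dy \<and> (\<forall>k\<le>D. r \<le> d k) \<and>
     (\<forall>k\<in>{1..D}. W k \<in> carrier_mat (d k) (d (k - 1))) \<and> chain W d 0 D = V"

definition diag_sqrt :: "real mat \<Rightarrow> real mat" where
  "diag_sqrt S = mat (dim_row S) (dim_col S) (\<lambda>(i,j). if i = j then sqrt (S $$ (i,i)) else 0)"

text \<open>Real power with the usual convention 0^0 = 1 (Isabelle's powr has 0 powr 0 = 0).\<close>
definition rpow :: "real \<Rightarrow> real \<Rightarrow> real" where
  "rpow x a = (if a = 0 then 1 else x powr a)"

end

theory Submission
  imports Defs "HOL-Analysis.Convex"
begin

definition frob :: "real mat \<Rightarrow> real" where
  "frob M = (\<Sum>i<dim_row M. \<Sum>j<dim_col M. (M$$(i,j))^2)"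

lemma mtrace_mult:
  assumes "A \<in> carrier_mat n m" "B \<in> carrier_mat m n"
  shows "mtrace (A*B) = (\<Sum>i<n. \<Sum>j<m. A$$(i,j) * B$$(j,i))"
  using assms unfolding mtrace_def
  by (auto simp: scalar_prod_def intro!: sum.cong simp: atLeast0LessThan)

lemma mtrace_mult_comm:
  assumes "A \<in> carrier_mat n m" "B \<in> carrier_mat m n"
  shows "mtrace (A*B) = mtrace (B*A)"
  using assms by (simp add: mtrace_mult[OF assms] mtrace_mult[OF assms(2,1)] sum.swap[of _ "{..<n}"] mult.commute)

lemma frob_nonneg: "frob M \<ge> 0"
  unfolding frob_def by (intro sum_nonneg) auto

lemma frob_tr1: assumes "M \<in> carrier_mat n m" shows "mtrace (M\<^sup>T * M) = frob M"
  using assms by (simp add: mtrace_mult[of "M\<^sup>T" m n M] frob_def power2_eq_square sum.swap[of _ "{..<m}"])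

lemma frob_tr2: assumes "M \<in> carrier_mat n m" shows "mtrace (M * M\<^sup>T) = frob M"
  using assms by (simp add: mtrace_mult[of M n m "M\<^sup>T"] frob_def power2_eq_square)

lemma frob_transpose: "frob (M\<^sup>T) = frob M"
  unfolding frob_def by (simp add: sum.swap[of _ "{..<dim_col M}"])

lemma mtrace_minus: assumes "A \<in> carrier_mat n n" "B \<in> carrier_mat n n"
  shows "mtrace (A - B) = mtrace A - mtrace B"
  using assms unfolding mtrace_def by (simp add: sum_subtractf)

lemma frob_smult: "frob (c \<cdot>\<^sub>m M) = c^2 * frob M"
  unfolding frob_def by (simp add: sum_distrib_left power_mult_distrib)

lemma CS_trace:
  assumes X: "X \<in> carrier_mat r m" and Y: "Y \<in> carrier_mat m r"
  shows "(mtrace (X*Y))^2 \<le> frob X * frob Y"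
proof -
  have "mtrace (X*Y) = (\<Sum>p\<in>{..<r}\<times>{..<m}. X$$(fst p, snd p) * Y$$(snd p, fst p))"
    by (simp add: mtrace_mult[OF X Y] sum.cartesian_product split_beta)
  moreover have "frob X = (\<Sum>p\<in>{..<r}\<times>{..<m}. (X$$(fst p, snd p))^2)"
    using X by (simp add: frob_def sum.cartesian_product)
  moreover have "frob Y = (\<Sum>p\<in>{..<r}\<times>{..<m}. (Y$$(snd p, fst p))^2)"
  proof -
    have "frob Y = (\<Sum>j<m. \<Sum>i<r. (Y$$(j,i))^2)" using Y by (simp add: frob_def)
    also have "\<dots> = (\<Sum>i<r. \<Sum>j<m. (Y$$(j,i))^2)" by (rule sum.swap)
    finally show ?thesis by (simp add: sum.cartesian_product split_beta)
  qed
  ultimately show ?thesis by (simp add: Cauchy_Schwarz_ineq_sum)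
qed

lemma frob_proj:
  assumes Q: "Q \<in> carrier_mat n r" and QQ: "Q\<^sup>T * Q = 1\<^sub>m r" and M: "M \<in> carrier_mat n m"
  shows "frob (Q\<^sup>T * M) \<le> frob M"
proof -
  define P where "P = Q * Q\<^sup>T"
  have P: "P \<in> carrier_mat n n" using Q by (simp add: P_def)
  have PP: "P * P = P"
  proof -
    have "P * P = Q * (Q\<^sup>T * (Q * Q\<^sup>T))" unfolding P_def using Q
      by (intro assoc_mult_mat[of Q n r "Q\<^sup>T" n]) auto
    also have "Q\<^sup>T * (Q * Q\<^sup>T) = (Q\<^sup>T * Q) * Q\<^sup>T" using Q
      by (intro assoc_mult_mat[symmetric, of "Q\<^sup>T" r n]) auto
    also have "\<dots> = Q\<^sup>T" using Q by (simp add: QQ)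
    finally show ?thesis by (simp add: P_def)
  qed
  have PT: "P\<^sup>T = P" using Q by (simp add: P_def transpose_mult[of Q n r])
  define E where "E = 1\<^sub>m n - P"
  have E: "E \<in> carrier_mat n n" using P unfolding E_def carrier_mat_def by auto
  have ET: "E\<^sup>T = E" using P PT by (simp add: E_def transpose_minus[of _ n n])
  have EE: "E * E = E"
  proof -
    have "E * E = 1\<^sub>m n * E - P * E" unfolding E_def
      by (rule minus_mult_distrib_mat[of _ n n], use P in auto)
    also have "P * E = P * 1\<^sub>m n - P * P" unfolding E_def
      by (rule mult_minus_distrib_mat[of _ n n], use P in auto)
    also have "\<dots> = 0\<^sub>m n n" using P PP by simp
    finally show ?thesis using E by (auto intro!: eq_matI)
  qed
  have "frob (E * M) = mtrace ((E*M)\<^sup>T * (E*M))" using E M by (simp add: frob_tr1[of _ n m])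
  also have "(E*M)\<^sup>T * (E*M) = M\<^sup>T * (E * M)"
  proof -
    have "(E*M)\<^sup>T * (E*M) = (M\<^sup>T * E) * (E*M)" using E M ET by (simp add: transpose_mult[of E n n M m])
    also have "\<dots> = M\<^sup>T * (E * (E * M))" using E M by (intro assoc_mult_mat[of _ m n _ n]) auto
    also have "E * (E * M) = (E * E) * M" using E M by (intro assoc_mult_mat[symmetric, of _ n n _ n]) auto
    finally show ?thesis using EE by simp
  qed
  also have "\<dots> = M\<^sup>T * M - M\<^sup>T * (P * M)" using E P M
    by (simp add: E_def minus_mult_distrib_mat[of _ n n] mult_minus_distrib_mat[of _ m n])
  also have "mtrace \<dots> = frob M - mtrace (M\<^sup>T * (P * M))" using P M
    by (simp add: mtrace_minus[of _ m] frob_tr1[of _ n m])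
  also have "M\<^sup>T * (P * M) = (Q\<^sup>T * M)\<^sup>T * (Q\<^sup>T * M)" using Q M
    using Q M by (simp add: P_def transpose_mult[of _ r n _ m] assoc_mult_mat[of "M\<^sup>T" m n Q r "Q\<^sup>T * M" m])
  also have "mtrace \<dots> = frob (Q\<^sup>T * M)" using Q M by (simp add: frob_tr1[of _ r m])
  finally show ?thesis using frob_nonneg[of "E*M"] by simp
qed

lemma holder:
  assumes A: "A \<in> carrier_mat p m" and B: "B \<in> carrier_mat m q"
    and L: "L \<in> carrier_mat p r" and LL: "L\<^sup>T * L = 1\<^sub>m r"
    and R: "R \<in> carrier_mat r q" and RR: "R * R\<^sup>T = 1\<^sub>m r"
    and S: "S \<in> carrier_mat r r" and AB: "A * B = L * S * R"
  shows "(mtrace S)^2 \<le> frob A * frob B"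
proof -
  have e1: "L\<^sup>T * (L * S * R) * R\<^sup>T = S"
  proof -
    have "L * S * R = L * (S * R)" using L S R by (intro assoc_mult_mat[of _ p r _ r]) auto
    moreover have "L\<^sup>T * (L * (S * R)) = (L\<^sup>T * L) * (S * R)" using L S R
      by (intro assoc_mult_mat[symmetric, of _ r p _ r]) auto
    moreover have "(S * R) * R\<^sup>T = S * (R * R\<^sup>T)" using S R
      by (intro assoc_mult_mat[of _ r r _ q]) auto
    ultimately show ?thesis using S R by (simp add: LL RR)
  qed
  have e2: "L\<^sup>T * (A * B) * R\<^sup>T = (L\<^sup>T * A) * (B * R\<^sup>T)"
  proof -
    have "L\<^sup>T * (A * B) = (L\<^sup>T * A) * B" using L A B
      by (intro assoc_mult_mat[symmetric, of _ r p _ m]) auto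
    moreover have "((L\<^sup>T * A) * B) * R\<^sup>T = (L\<^sup>T * A) * (B * R\<^sup>T)" using L A B R
      by (intro assoc_mult_mat[of _ r m _ q]) auto
    ultimately show ?thesis by simp
  qed
  have X: "L\<^sup>T * A \<in> carrier_mat r m" using L A by auto
  have Y: "B * R\<^sup>T \<in> carrier_mat m r" using B R by auto
  have "mtrace S = mtrace ((L\<^sup>T * A) * (B * R\<^sup>T))" using e1 e2 AB by simp
  hence "(mtrace S)^2 \<le> frob (L\<^sup>T * A) * frob (B * R\<^sup>T)" using CS_trace[OF X Y] by simp
  also have "\<dots> \<le> frob A * frob B"
  proof (rule mult_mono)
    show "frob (L\<^sup>T * A) \<le> frob A" by (rule frob_proj[OF L LL A])
    have "frob (B * R\<^sup>T) = frob ((R\<^sup>T)\<^sup>T * B\<^sup>T)"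
      using B R by (simp add: frob_transpose[symmetric, of "B * R\<^sup>T"] transpose_mult[of B m q])
    also have "\<dots> \<le> frob (B\<^sup>T)" by (rule frob_proj[of _ q r]) (use R B RR in auto)
    finally show "frob (B * R\<^sup>T) \<le> frob B" by (simp add: frob_transpose)
  qed (auto simp: frob_nonneg)
  finally show ?thesis .
qed

lemma chain_carrier:
  assumes "\<forall>k\<in>{a+1..a+n}. W k \<in> carrier_mat (d k) (d (k-1))"
  shows "chain W d a n \<in> carrier_mat (d (a+n)) (d a)"
  using assms
proof (induction n)
  case 0 then show ?case by simp
next
  case (Suc n)
  have "W (a + Suc n) \<in> carrier_mat (d (a + Suc n)) (d (a+n))"
    using Suc.prems by (auto dest: bspec[of _ _ "a + Suc n"])
  moreover have "chain W d a n \<in> carrier_mat (d (a+n)) (d a)" using Suc by auto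
  ultimately show ?case by simp
qed

lemma chain_comp:
  assumes "\<forall>k\<in>{a+1..a+m+n}. W k \<in> carrier_mat (d k) (d (k-1))"
  shows "chain W d (a+m) n * chain W d a m = chain W d a (m+n)"
  using assms
proof (induction n)
  case 0
  have "chain W d a m \<in> carrier_mat (d (a+m)) (d a)" using 0 by (intro chain_carrier) auto
  then show ?case by simp
next
  case (Suc n)
  have W: "W (a + m + Suc n) \<in> carrier_mat (d (a + m + Suc n)) (d (a+m+n))"
    using Suc.prems by (auto dest: bspec[of _ _ "a + m + Suc n"])
  have C1: "chain W d (a+m) n \<in> carrier_mat (d (a+m+n)) (d (a+m))"
    using Suc.prems by (intro chain_carrier) auto
  have C2: "chain W d a m \<in> carrier_mat (d (a+m)) (d a)"
    using Suc.prems by (intro chain_carrier) auto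
  have IH: "chain W d (a+m) n * chain W d a m = chain W d a (m+n)" using Suc by auto
  have "chain W d (a+m) (Suc n) * chain W d a m = W (a + m + Suc n) * (chain W d (a+m) n * chain W d a m)"
    using W C1 C2 by (simp add: assoc_mult_mat[OF W C1 C2] add.assoc)
  also have "\<dots> = chain W d a (m + Suc n)" using IH by (simp add: add.assoc)
  finally show ?case .
qed

lemma feasible_carrier:
  assumes "feasible D dx dy r V W d" "k \<le> D"
  shows "Amat D W d k \<in> carrier_mat dy (d k)" "k \<ge> 1 \<Longrightarrow> Bmat W d k \<in> carrier_mat (d (k-1)) dx"
proof -
  have W: "\<forall>k\<in>{1..D}. W k \<in> carrier_mat (d k) (d (k - 1))" and d: "d 0 = dx" "d D = dy"
    using assms unfolding feasible_def by auto
  show "Amat D W d k \<in> carrier_mat dy (d k)" unfolding Amat_def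
    using chain_carrier[of k "D-k" W d] W assms(2) d by auto
  have "\<forall>j\<in>{0+1..0+(k-1)}. W j \<in> carrier_mat (d j) (d (j - 1))" using W assms(2) by auto
  from chain_carrier[OF this] 
  show "k \<ge> 1 \<Longrightarrow> Bmat W d k \<in> carrier_mat (d (k-1)) dx" unfolding Bmat_def
    using d by auto
qed

lemma feasible_AB:
  assumes "feasible D dx dy r V W d" "k < D"
  shows "Amat D W d k * Bmat W d (Suc k) = V"
proof -
  have W: "\<forall>k\<in>{1..D}. W k \<in> carrier_mat (d k) (d (k - 1))" and V: "chain W d 0 D = V"
    using assms unfolding feasible_def by auto
  have "chain W d (0+k) (D-k) * chain W d 0 k = chain W d 0 (k + (D-k))"
    using W assms(2) by (intro chain_comp) auto
  then show ?thesis using assms(2) V by (simp add: Amat_def Bmat_def)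
qed

lemma sq_lemma:
  fixes B Sh :: "real mat"
  assumes B: "B \<in> carrier_mat p n" and Sh: "Sh \<in> carrier_mat n n" and T: "Sh\<^sup>T = Sh"
  shows "B * (Sh * Sh) * B\<^sup>T = (B * Sh) * (B * Sh)\<^sup>T"
proof -
  have "(B * Sh) * (B * Sh)\<^sup>T = (B * Sh) * (Sh * B\<^sup>T)" using B Sh T by (simp add: transpose_mult[OF B Sh])
  also have "\<dots> = ((B * Sh) * Sh) * B\<^sup>T" using B Sh by (intro assoc_mult_mat[symmetric, of _ p n _ n]) auto
  also have "(B * Sh) * Sh = B * (Sh * Sh)" using B Sh by (intro assoc_mult_mat[of _ p n _ n]) auto
  finally show ?thesis by simp
qed

lemma frob_one: "frob (1\<^sub>m n) = real n"
proof -
  have "frob (1\<^sub>m n) = mtrace ((1\<^sub>m n)\<^sup>T * 1\<^sub>m n)" by (rule frob_tr1[symmetric, of _ n n]) auto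
  also have "\<dots> = real n" by (simp add: mtrace_def)
  finally show ?thesis .
qed

lemma mtrace_S_nonneg:
  assumes "S \<in> carrier_mat r r" "\<forall>i<r. S $$ (i,i) > 0"
  shows "mtrace S \<ge> 0"
  using assms unfolding mtrace_def by (intro sum_nonneg) (auto intro: less_imp_le)

lemma final_alg:
  fixes s y :: real and D :: nat
  assumes "D \<ge> 1" "s \<ge> 0" "y \<ge> 0"
  shows "real D * (y * s^(2*(D-1))) powr (1 / real D) =
         real D * rpow s (2 * (real D - 1) / real D) * y powr (1 / real D)"
proof (cases "D = 1")
  case True then show ?thesis by (simp add: rpow_def)
next
  case False
  hence D2: "D \<ge> 2" using assms by auto
  have ne: "2 * (real D - 1) / real D \<noteq> 0" using D2 by auto
  have "(s^(2*(D-1))) powr (1 / real D) = s powr (2 * (real D - 1) / real D)"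
  proof (cases "s = 0")
    case True then show ?thesis using D2 by simp
  next
    case False
    hence "s > 0" using assms by auto
    hence "s^(2*(D-1)) = s powr (real (2*(D-1)))" by (rule powr_realpow[symmetric])
    moreover have "real (2*(D-1)) * (1 / real D) = 2 * (real D - 1) / real D" using D2 by (simp add: of_nat_diff)
    ultimately show ?thesis by (metis powr_powr)
  qed
  then show ?thesis using assms ne by (simp add: rpow_def powr_mult)
qed

lemma part1:
  assumes D1: "D \<ge> 1"
    and Sh_pd: "pos_def_mat dx Sh" and Sh_sq: "Sh * Sh = Sig"
    and L: "L \<in> carrier_mat dy r" and LL: "L\<^sup>T * L = 1\<^sub>m r"
    and R: "R \<in> carrier_mat r dx" and RR: "R * R\<^sup>T = 1\<^sub>m r"
    and S: "S \<in> carrier_mat r r"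
    and S_pos: "\<forall>i<r. S $$ (i,i) > 0"
    and svd: "V * Sh = L * S * R"
    and feas: "feasible D dx dy r V W d"
  shows "Tobj D Sig W d \<ge> real D * rpow (mtrace S) (2 * (real D - 1) / real D)
                             * (real dy * mtrace Sig) powr (1 / real D)"
proof -
  have Sh: "Sh \<in> carrier_mat dx dx" and ShT: "Sh\<^sup>T = Sh" using Sh_pd unfolding pos_def_mat_def by auto
  have d: "d 0 = dx" "d D = dy" using feas unfolding feasible_def by auto
  define s where "s = mtrace S"
  have s0: "s \<ge> 0" unfolding s_def using S S_pos by (rule mtrace_S_nonneg)
  define a where "a k = frob (Amat D W d k)" for k
  define b where "b k = frob (Bmat W d k * Sh)" for k
  have terms: "mtrace ((Amat D W d k)\<^sup>T * Amat D W d k) * mtrace (Bmat W d k * Sig * (Bmat W d k)\<^sup>T) = a k * b k"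
    if k: "k \<in> {1..D}" for k
  proof -
    have A: "Amat D W d k \<in> carrier_mat dy (d k)" using feasible_carrier(1)[OF feas] k by auto
    have B: "Bmat W d k \<in> carrier_mat (d (k-1)) dx" using feasible_carrier(2)[OF feas] k by auto
    have "Bmat W d k * Sig * (Bmat W d k)\<^sup>T = (Bmat W d k * Sh) * (Bmat W d k * Sh)\<^sup>T"
      using sq_lemma[OF B Sh ShT] Sh_sq by simp
    then show ?thesis unfolding a_def b_def using A B Sh
      by (simp add: frob_tr1[OF A] frob_tr2[of _ "d (k-1)" dx])
  qed
  have T: "Tobj D Sig W d = (\<Sum>k\<in>{1..D}. a k * b k)"
    unfolding Tobj_def using terms by (intro sum.cong) auto
  have aD: "a D = real dy" unfolding a_def Amat_def using d by (simp add: frob_one)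
  have b1: "b 1 = mtrace Sig" unfolding b_def Bmat_def using d Sh Sh_sq ShT
    by (simp add: frob_tr2[OF Sh, symmetric])
  have pair: "s^2 \<le> a k * b (Suc k)" if k: "1 \<le> k" "k < D" for k
  proof -
    have A: "Amat D W d k \<in> carrier_mat dy (d k)" using feasible_carrier(1)[OF feas] k by auto
    have B: "Bmat W d (Suc k) \<in> carrier_mat (d k) dx" using feasible_carrier(2)[OF feas, of "Suc k"] k by auto
    have "Amat D W d k * (Bmat W d (Suc k) * Sh) = (Amat D W d k * Bmat W d (Suc k)) * Sh"
      using A B Sh by (intro assoc_mult_mat[symmetric, of _ dy "d k" _ dx]) auto
    also have "\<dots> = L * S * R" using feasible_AB[OF feas k(2)] svd by simp
    finally have "Amat D W d k * (Bmat W d (Suc k) * Sh) = L * S * R" .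
    from holder[OF A _ L LL R RR S this] B Sh show ?thesis unfolding a_def b_def s_def by auto
  qed
  have a0: "a k \<ge> 0" "b k \<ge> 0" for k unfolding a_def b_def by (auto simp: frob_nonneg)
  obtain n where n: "D = Suc n" using D1 by (cases D) auto
  have "(\<Prod>k\<in>{1..D}. a k * b k) = (\<Prod>k\<in>{1..D}. a k) * (\<Prod>k\<in>{1..D}. b k)"
    by (rule prod.distrib)
  also have "(\<Prod>k\<in>{1..D}. a k) = (\<Prod>k\<in>{1..n}. a k) * a D" using n by (simp add: prod.cl_ivl_Suc)
  also have "(\<Prod>k\<in>{1..D}. b k) = b 1 * (\<Prod>k\<in>{Suc 1..Suc n}. b k)" unfolding n
    by (intro prod.atLeast_Suc_atMost) auto
  also have "(\<Prod>k\<in>{Suc 1..Suc n}. b k) = (\<Prod>k\<in>{1..n}. b (Suc k))"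
    by (rule prod.shift_bounds_cl_Suc_ivl)
  finally have "(\<Prod>k\<in>{1..D}. a k * b k) = a D * b 1 * (\<Prod>k\<in>{1..n}. a k * b (Suc k))"
    by (simp add: prod.distrib)
  moreover have "(\<Prod>k\<in>{1..n}. s^2) \<le> (\<Prod>k\<in>{1..n}. a k * b (Suc k))"
    using pair n by (intro prod_mono) auto
  moreover have "(\<Prod>k\<in>{1..n}. s^2) = s^(2*(D-1))" using n by (simp add: power_mult)
  moreover have "real dy * mtrace Sig \<ge> 0" using b1 a0(2)[of 1] by simp
  ultimately have P: "real dy * mtrace Sig * s^(2*(D-1)) \<le> (\<Prod>k\<in>{1..D}. a k * b k)"
    using aD b1 by (simp add: mult_left_mono)
  have "real dy * mtrace Sig \<ge> 0" using b1 a0(2)[of 1] by simp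
  have "(\<Prod>k\<in>{1..D}. a k * b k) powr (1 / real (card {1..D})) \<le> (\<Sum>k\<in>{1..D}. a k * b k / real (card {1..D}))"
    using D1 a0 by (intro arith_geom_mean) auto
  hence "(\<Prod>k\<in>{1..D}. a k * b k) powr (1 / real D) \<le> (\<Sum>k\<in>{1..D}. a k * b k) / real D"
    by (simp add: sum_divide_distrib)
  hence amgm: "real D * (\<Prod>k\<in>{1..D}. a k * b k) powr (1 / real D) \<le> Tobj D Sig W d"
    using D1 T by (simp add: field_simps)
  have "(real dy * mtrace Sig * s^(2*(D-1))) powr (1 / real D) \<le> (\<Prod>k\<in>{1..D}. a k * b k) powr (1 / real D)"
    using P \<open>real dy * mtrace Sig \<ge> 0\<close> s0 by (intro powr_mono2) auto
  hence "real D * (real dy * mtrace Sig * s^(2*(D-1))) powr (1 / real D) \<le> Tobj D Sig W d"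
    using amgm D1 by (smt (verit) mult_left_mono of_nat_0_le_iff)
  moreover have "real D * (real dy * mtrace Sig * s^(2*(D-1))) powr (1 / real D) =
     real D * rpow s (2 * (real D - 1) / real D) * (real dy * mtrace Sig) powr (1 / real D)"
    using final_alg[OF D1 s0 \<open>real dy * mtrace Sig \<ge> 0\<close>] by simp
  ultimately have "real D * rpow s (2 * (real D - 1) / real D) * (real dy * mtrace Sig) powr (1 / real D) \<le> Tobj D Sig W d"
    by linarith
  then show ?thesis unfolding s_def .
qed

lemma diag_sqrt_props:
  assumes S: "S \<in> carrier_mat r r" and Sd: "diagonal_mat S" and Sp: "\<forall>i<r. S $$ (i,i) > 0"
  shows "diag_sqrt S \<in> carrier_mat r r" "(diag_sqrt S)\<^sup>T = diag_sqrt S"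
    "diag_sqrt S * diag_sqrt S = S" "frob (diag_sqrt S) = mtrace S"
proof -
  show C: "diag_sqrt S \<in> carrier_mat r r" using S by (simp add: diag_sqrt_def)
  show "(diag_sqrt S)\<^sup>T = diag_sqrt S" using S by (auto simp: diag_sqrt_def intro!: eq_matI)
  show "diag_sqrt S * diag_sqrt S = S"
  proof (rule eq_matI)
    fix i j assume ij: "i < dim_row S" "j < dim_col S"
    have "(diag_sqrt S * diag_sqrt S) $$ (i,j) = (\<Sum>k<r. (if i = k then sqrt (S$$(i,i)) else 0) * (if k = j then sqrt (S$$(k,k)) else 0))"
      using S ij by (simp add: diag_sqrt_def scalar_prod_def atLeast0LessThan)
    also have "\<dots> = (if i = j then S $$ (i,i) else 0)"
      using ij S Sp by (auto simp: if_distrib[of "\<lambda>x. x * _"] cong: if_cong)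
    also have "\<dots> = S $$ (i,j)" using Sd ij unfolding diagonal_mat_def by auto
    finally show "(diag_sqrt S * diag_sqrt S) $$ (i,j) = S $$ (i,j)" .
  qed (use S in \<open>auto simp: diag_sqrt_def\<close>)
  have "frob (diag_sqrt S) = (\<Sum>i<r. \<Sum>j<r. (if i = j then sqrt (S$$(i,i)) else 0)^2)"
    using S by (auto simp: frob_def diag_sqrt_def intro!: sum.cong)
  also have "\<dots> = (\<Sum>i<r. \<Sum>j<r. if i = j then S$$(i,i) else 0)"
    by (intro sum.cong refl) (use Sp in \<open>auto simp: less_imp_le\<close>)
  also have "\<dots> = mtrace S" using S by (simp add: mtrace_def)
  finally show "frob (diag_sqrt S) = mtrace S" .
qed

lemma frob_orth_left:
  assumes X: "X \<in> carrier_mat p r" and XX: "X\<^sup>T * X = 1\<^sub>m r" and Z: "Z \<in> carrier_mat r q"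
  shows "frob (X * Z) = frob Z"
proof -
  have "frob (X * Z) = mtrace ((X*Z)\<^sup>T * (X*Z))" using X Z by (simp add: frob_tr1[of _ p q])
  also have "(X*Z)\<^sup>T * (X*Z) = Z\<^sup>T * (X\<^sup>T * (X * Z))" using X Z
    by (simp add: transpose_mult[OF X Z] assoc_mult_mat[of _ q r _ p _ q])
  also have "X\<^sup>T * (X * Z) = (X\<^sup>T * X) * Z" using X Z by (intro assoc_mult_mat[symmetric, of _ r p _ r]) auto
  also have "mtrace (Z\<^sup>T * ((X\<^sup>T * X) * Z)) = frob Z" using Z by (simp add: XX frob_tr1[OF Z])
  finally show ?thesis .
qed

lemma frob_orth_right:
  assumes Y: "Y \<in> carrier_mat r q" and YY: "Y * Y\<^sup>T = 1\<^sub>m r" and Z: "Z \<in> carrier_mat p r"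
  shows "frob (Z * Y) = frob Z"
proof -
  have "frob (Z * Y) = frob ((Z * Y)\<^sup>T)" by (simp add: frob_transpose)
  also have "\<dots> = frob (Y\<^sup>T * Z\<^sup>T)" using Y Z by (simp add: transpose_mult[OF Z Y])
  also have "\<dots> = frob (Z\<^sup>T)" by (rule frob_orth_left[of _ q r]) (use Y Z YY in auto)
  finally show ?thesis by (simp add: frob_transpose)
qed

lemma cancel_UT:
  fixes X U Y :: "real mat"
  assumes X: "X \<in> carrier_mat p r" and U: "U \<in> carrier_mat m r" and UU: "U\<^sup>T * U = 1\<^sub>m r"
    and Y: "Y \<in> carrier_mat r q"
  shows "(X * U\<^sup>T) * (U * Y) = X * Y"
proof -
  have "(X * U\<^sup>T) * (U * Y) = X * (U\<^sup>T * (U * Y))" using X U Y by (intro assoc_mult_mat[of _ p r _ m]) auto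
  also have "U\<^sup>T * (U * Y) = (U\<^sup>T * U) * Y" using U Y by (intro assoc_mult_mat[symmetric, of _ r m _ r]) auto
  finally show ?thesis using UU Y by (simp add: left_mult_one_mat[OF Y])
qed

lemma chain_split:
  assumes "\<forall>k\<in>{a+1..a+1+n}. W k \<in> carrier_mat (d k) (d (k-1))"
  shows "chain W d a (Suc n) = chain W d (Suc a) n * W (Suc a)"
proof -
  have "chain W d (a+1) n * chain W d a 1 = chain W d a (1+n)" using assms by (intro chain_comp) auto
  moreover have "W (Suc a) \<in> carrier_mat (d (Suc a)) (d a)" using assms by (auto dest: bspec[of _ _ "Suc a"])
  ultimately show ?thesis by simp
qed

lemma Sh_cancel:
  assumes Sh: "pos_def_mat n Sh" and X: "X \<in> carrier_mat p n" and Y: "Y \<in> carrier_mat p n"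
    and eq: "X * Sh = Y * Sh"
  shows "X = Y"
proof (rule eq_matI)
  have ShC: "Sh \<in> carrier_mat n n" and ShT: "Sh\<^sup>T = Sh"
    and pd: "\<forall>x \<in> carrier_vec n. x \<noteq> 0\<^sub>v n \<longrightarrow> x \<bullet> (Sh *\<^sub>v x) > 0" using Sh unfolding pos_def_mat_def by auto
  fix i j assume ij: "i < dim_row Y" "j < dim_col Y"
  define v where "v = row X i - row Y i"
  have v: "v \<in> carrier_vec n" using X Y unfolding v_def carrier_vec_def by auto
  have "Sh *\<^sub>v v = 0\<^sub>v n"
  proof (rule eq_vecI)
    fix k assume k: "k < dim_vec (0\<^sub>v n :: real vec)"
    have rk: "row Sh k = col Sh k" using ShT k ShC by (metis carrier_matD(1) carrier_matD(2) col_transpose index_zero_vec(2))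
    have "(Sh *\<^sub>v v) $ k = row Sh k \<bullet> v" using k ShC by simp
    also have "\<dots> = v \<bullet> col Sh k" using rk v ShC k by (simp add: comm_scalar_prod[of _ n])
    also have "\<dots> = row X i \<bullet> col Sh k - row Y i \<bullet> col Sh k"
      unfolding v_def using X Y ShC k by (intro minus_scalar_prod_distrib[of _ n]) auto
    also have "\<dots> = (X * Sh) $$ (i,k) - (Y * Sh) $$ (i,k)" using X Y ShC ij k by simp
    also have "\<dots> = 0" using eq by simp
    finally show "(Sh *\<^sub>v v) $ k = 0\<^sub>v n $ k" using k by simp
  qed (use ShC in auto)
  hence "v = 0\<^sub>v n" using pd v by fastforce
  hence "row X i $ j = row Y i $ j" unfolding v_def using X Y ij
    by (metis carrier_matD(1) carrier_matD(2) index_minus_vec(1) index_zero_vec(1) eq_iff_diff_eq_0 row_carrier carrier_vecD)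
  thus "X $$ (i,j) = Y $$ (i,j)" using X Y ij by auto
qed (use X Y in auto)

lemma exp_powr': "exp (x::real) powr a = exp (a * x)" by (simp add: powr_def)

lemma exp_terms:
  fixes x u v :: real and D :: nat
  assumes D2: "D \<ge> 2"
  defines "cD \<equiv> exp x powr (- (real D - 2) / (2 * real D)) * exp u powr ((real D - 1) / (2 * real D))
                 * exp v powr (- 1 / (2 * real D))"
    and "cm \<equiv> exp x powr (1 / real D) * (exp u * exp v) powr (- 1 / (2 * real D))"
    and "c1 \<equiv> exp x powr (- (real D - 2) / (2 * real D)) * exp u powr (- 1 / (2 * real D))
                 * exp v powr ((real D - 1) / (2 * real D))"
    and "E \<equiv> exp x powr (2 * (real D - 1) / real D) * (exp u * exp v) powr (1 / real D)"
  shows "cD * cm^(D-2) * c1 = 1"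
    and "(cD * cm^(D-2))^2 * exp x * exp v = E"
    and "exp u * ((cm^(D-2) * c1)^2 * exp x) = E"
    and "2 \<le> k \<Longrightarrow> k \<le> D - 1 \<Longrightarrow> (cD * cm^(D-1-k))^2 * exp x * ((cm^(k-2) * c1)^2 * exp x) = E"
proof -
  have Dp: "real D > 0" using D2 by auto
  have cD: "cD = exp ((- (real D - 2) / (2 * real D)) * x + ((real D - 1) / (2 * real D)) * u + (- 1 / (2 * real D)) * v)"
    unfolding cD_def exp_powr' exp_add[symmetric] by (rule arg_cong[where f=exp]) (simp add: field_simps)
  have cm: "cm = exp ((1 / real D) * x + (- 1 / (2 * real D)) * (u + v))"
    unfolding cm_def exp_add[symmetric] exp_powr' by (rule arg_cong[where f=exp]) (simp add: field_simps)
  have c1: "c1 = exp ((- (real D - 2) / (2 * real D)) * x + (- 1 / (2 * real D)) * u + ((real D - 1) / (2 * real D)) * v)"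
    unfolding c1_def exp_powr' exp_add[symmetric] by (rule arg_cong[where f=exp]) (simp add: field_simps)
  have E: "E = exp ((2 * (real D - 1) / real D) * x + (1 / real D) * (u + v))"
    unfolding E_def exp_add[symmetric] exp_powr' by (rule arg_cong[where f=exp]) (simp add: field_simps)
  have pw: "exp a ^ n = exp (real n * a)" for a :: real and n by (simp add: exp_of_nat_mult)
  have sq: "exp a ^ 2 = exp (2 * a)" for a :: real using pw[of a 2] by simp
  have D2r: "real (D - 2) = real D - 2" using D2 by (simp add: of_nat_diff)
  show "cD * cm^(D-2) * c1 = 1"
    unfolding cD cm c1 pw D2r
    by (simp only: exp_add[symmetric] exp_zero[symmetric]) (use Dp in \<open>simp add: field_simps\<close>)
  show "(cD * cm^(D-2))^2 * exp x * exp v = E"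
    unfolding cD cm E pw D2r
    by (simp only: exp_add[symmetric] sq power_mult_distrib) (use Dp in \<open>simp add: field_simps\<close>)
  show "exp u * ((cm^(D-2) * c1)^2 * exp x) = E"
    unfolding c1 cm E pw D2r
    by (simp only: exp_add[symmetric] sq power_mult_distrib) (use Dp in \<open>simp add: field_simps\<close>)
  assume k: "2 \<le> k" "k \<le> D - 1"
  have r1: "real (D - 1 - k) = real D - 1 - real k" using k by (simp add: of_nat_diff)
  have r2: "real (k - 2) = real k - 2" using k by (simp add: of_nat_diff)
  show "(cD * cm^(D-1-k))^2 * exp x * ((cm^(k-2) * c1)^2 * exp x) = E"
    unfolding cD cm c1 E pw r1 r2
    by (simp only: exp_add[symmetric] sq power_mult_distrib) (use Dp in \<open>simp add: field_simps\<close>)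
qed

lemma smult_smult_mat': "a \<cdot>\<^sub>m (b \<cdot>\<^sub>m M) = (a * b) \<cdot>\<^sub>m (M :: real mat)"
  by (rule eq_matI) auto

lemma smult_mult_smult:
  fixes M N :: "real mat"
  assumes "M \<in> carrier_mat p m" "N \<in> carrier_mat m q"
  shows "(a \<cdot>\<^sub>m M) * (b \<cdot>\<^sub>m N) = (a * b) \<cdot>\<^sub>m (M * N)"
  using assms by (simp add: mult_smult_assoc_mat[of _ p m] mult_smult_distrib[of _ p m] smult_smult_mat' mult.commute)

lemma Tobj_frob:
  assumes feas: "feasible D dx dy r V W d" and Sh_pd: "pos_def_mat dx Sh" and Sh_sq: "Sh * Sh = Sig"
  shows "Tobj D Sig W d = (\<Sum>k\<in>{1..D}. frob (Amat D W d k) * frob (Bmat W d k * Sh))"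
proof -
  have Sh: "Sh \<in> carrier_mat dx dx" and ShT: "Sh\<^sup>T = Sh" using Sh_pd unfolding pos_def_mat_def by auto
  have terms: "mtrace ((Amat D W d k)\<^sup>T * Amat D W d k) * mtrace (Bmat W d k * Sig * (Bmat W d k)\<^sup>T)
      = frob (Amat D W d k) * frob (Bmat W d k * Sh)"
    if k: "k \<in> {1..D}" for k
  proof -
    have A: "Amat D W d k \<in> carrier_mat dy (d k)" using feasible_carrier(1)[OF feas] k by auto
    have B: "Bmat W d k \<in> carrier_mat (d (k-1)) dx" using feasible_carrier(2)[OF feas] k by auto
    have "Bmat W d k * Sig * (Bmat W d k)\<^sup>T = (Bmat W d k * Sh) * (Bmat W d k * Sh)\<^sup>T"
      using sq_lemma[OF B Sh ShT] Sh_sq by simp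
    then show ?thesis using A B Sh
      by (simp add: frob_tr1[OF A] frob_tr2[of _ "d (k-1)" dx])
  qed
  show ?thesis unfolding Tobj_def using terms by (intro sum.cong) auto
qed

lemma part3_keys:
  assumes D2: "D \<ge> 2"
    and L: "L \<in> carrier_mat dy r" and R: "R \<in> carrier_mat r dx"
    and S2: "S2 \<in> carrier_mat r r"
    and d0: "d 0 = dx" and dD: "d D = dy"
    and U: "\<forall>i\<in>{1..D-1}. U i \<in> carrier_mat (d i) r \<and> (U i)\<^sup>T * U i = 1\<^sub>m r"
    and Wc: "\<forall>k\<in>{1..D}. W k \<in> carrier_mat (d k) (d (k - 1))"
    and WD: "W D = cD \<cdot>\<^sub>m (L * S2 * (U (D - 1))\<^sup>T)"
    and Wk: "\<forall>k\<in>{2..D-1}. W k = cm \<cdot>\<^sub>m (U k * (U (k - 1))\<^sup>T)"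
    and W1: "W 1 * Sh = c1 \<cdot>\<^sub>m (U 1 * S2 * R)"
    and Sh: "Sh \<in> carrier_mat dx dx"
  shows "j \<le> D - 2 \<Longrightarrow> chain W d (D-1-j) (Suc j) = (cD * cm^j) \<cdot>\<^sub>m (L * S2 * (U (D-1-j))\<^sup>T)"
    and "j \<le> D - 2 \<Longrightarrow> chain W d 0 (Suc j) * Sh = (cm^j * c1) \<cdot>\<^sub>m (U (Suc j) * S2 * R)"
proof -
  have Uf: "\<And>i. 1 \<le> i \<Longrightarrow> i \<le> D-1 \<Longrightarrow> U i \<in> carrier_mat (d i) r \<and> (U i)\<^sup>T * U i = 1\<^sub>m r"
    using U by auto
  have Wf: "\<And>k. 1 \<le> k \<Longrightarrow> k \<le> D \<Longrightarrow> W k \<in> carrier_mat (d k) (d (k-1))"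
    using Wc by auto
  show "j \<le> D - 2 \<Longrightarrow> chain W d (D-1-j) (Suc j) = (cD * cm^j) \<cdot>\<^sub>m (L * S2 * (U (D-1-j))\<^sup>T)"
  proof (induction j)
    case 0
    have C: "W D \<in> carrier_mat (d D) (d (D-1))" using Wc D2 by auto
    have "chain W d (D-1-0) (Suc 0) = W (D - 1 + Suc 0) * 1\<^sub>m (d (D-1))" by simp
    also have "D - 1 + Suc 0 = D" using D2 by simp
    finally have "chain W d (D-1-0) (Suc 0) = W D" using right_mult_one_mat[OF C] by simp
    then show ?case using WD by simp
  next
    case (Suc j)
    have j: "j \<le> D - 3" "D \<ge> 3" using Suc.prems by auto
    have ch: "\<forall>k\<in>{(D-1-Suc j)+1..(D-1-Suc j)+1+Suc j}. W k \<in> carrier_mat (d k) (d (k-1))"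
      using Wc j D2 by auto
    have e1: "Suc (D-1-Suc j) = D-1-j" using j D2 by auto
    have Ua: "U (D-1-j) \<in> carrier_mat (d (D-1-j)) r" "(U (D-1-j))\<^sup>T * U (D-1-j) = 1\<^sub>m r"
      using Uf[of "D-1-j"] j by (simp_all add: le_diff_conv2)
    have Ub: "U (D-1-Suc j) \<in> carrier_mat (d (D-1-Suc j)) r"
      using Uf[of "D-1-Suc j"] j by (simp_all add: le_diff_conv2)
    have "chain W d (D-1-Suc j) (Suc (Suc j)) = chain W d (D-1-j) (Suc j) * W (D-1-j)"
      using chain_split[OF ch] unfolding e1 .
    also have "chain W d (D-1-j) (Suc j) = (cD * cm^j) \<cdot>\<^sub>m (L * S2 * (U (D-1-j))\<^sup>T)"
      using Suc by auto
    also have "W (D-1-j) = cm \<cdot>\<^sub>m (U (D-1-j) * (U (D-1-j-1))\<^sup>T)"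
      using Wk j D2 by (intro Wk[rule_format]) auto
    also have "D-1-j-1 = D-1-Suc j" by simp
    also have "((cD * cm^j) \<cdot>\<^sub>m (L * S2 * (U (D-1-j))\<^sup>T)) * (cm \<cdot>\<^sub>m (U (D-1-j) * (U (D-1-Suc j))\<^sup>T))
        = (cD * cm^j * cm) \<cdot>\<^sub>m ((L * S2 * (U (D-1-j))\<^sup>T) * (U (D-1-j) * (U (D-1-Suc j))\<^sup>T))"
      using Ua Ub L S2 j D2 by (intro smult_mult_smult[of _ dy "d (D-1-j)" _ "d (D-1-Suc j)"]) auto
    also have "(L * S2 * (U (D-1-j))\<^sup>T) * (U (D-1-j) * (U (D-1-Suc j))\<^sup>T) = (L * S2) * (U (D-1-Suc j))\<^sup>T"
      using Ua Ub L S2 j D2 by (intro cancel_UT[of _ dy r _ "d (D-1-j)" _ "d (D-1-Suc j)"]) auto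
    finally show ?case by (simp only: power_Suc2 mult.assoc)
  qed
  show "j \<le> D - 2 \<Longrightarrow> chain W d 0 (Suc j) * Sh = (cm^j * c1) \<cdot>\<^sub>m (U (Suc j) * S2 * R)"
  proof (induction j)
    case 0
    have "W 1 \<in> carrier_mat (d 1) (d 0)" using Wf[of 1] D2 by simp
    then show ?case using W1 by simp
  next
    case (Suc j)
    have j: "j \<le> D - 3" "D \<ge> 3" using Suc.prems by auto
    have Ua: "U (Suc j) \<in> carrier_mat (d (Suc j)) r" "(U (Suc j))\<^sup>T * U (Suc j) = 1\<^sub>m r"
      using Uf[of "Suc j"] j by (simp_all add: le_diff_conv2)
    have Ub: "U (Suc (Suc j)) \<in> carrier_mat (d (Suc (Suc j))) r"
      using Uf[of "Suc (Suc j)"] j by (simp_all add: le_diff_conv2)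
    have C: "chain W d 0 (Suc j) \<in> carrier_mat (d (Suc j)) dx"
    proof -
      have "\<forall>k\<in>{0+1..0+Suc j}. W k \<in> carrier_mat (d k) (d (k-1))"
      proof
        fix k assume k: "k \<in> {0+1..0+Suc j}"
        hence "1 \<le> k" "k \<le> Suc j" by auto
        moreover have "k \<le> D" using \<open>k \<le> Suc j\<close> j by arith
        ultimately show "W k \<in> carrier_mat (d k) (d (k-1))" using Wf[of k] by simp
      qed
      from chain_carrier[OF this] show ?thesis using d0 by simp
    qed
    have WC: "W (Suc (Suc j)) \<in> carrier_mat (d (Suc (Suc j))) (d (Suc j))" using Wf[of "Suc (Suc j)"] j by simp
    have "chain W d 0 (Suc (Suc j)) * Sh = W (Suc (Suc j)) * (chain W d 0 (Suc j) * Sh)"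
      using assoc_mult_mat[OF WC C Sh] by simp
    also have "chain W d 0 (Suc j) * Sh = (cm^j * c1) \<cdot>\<^sub>m (U (Suc j) * S2 * R)" using Suc by auto
    also have "W (Suc (Suc j)) = cm \<cdot>\<^sub>m (U (Suc (Suc j)) * (U (Suc j))\<^sup>T)"
      using Wk j D2 by auto
    also have "(cm \<cdot>\<^sub>m (U (Suc (Suc j)) * (U (Suc j))\<^sup>T)) * ((cm^j * c1) \<cdot>\<^sub>m (U (Suc j) * S2 * R))
       = (cm * (cm^j * c1)) \<cdot>\<^sub>m ((U (Suc (Suc j)) * (U (Suc j))\<^sup>T) * (U (Suc j) * S2 * R))"
      using Ua Ub S2 R j D2 by (intro smult_mult_smult[of _ "d (Suc (Suc j))" "d (Suc j)" _ dx]) auto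
    also have "U (Suc j) * S2 * R = U (Suc j) * (S2 * R)"
      using Ua Ub S2 R j D2 by (intro assoc_mult_mat[of _ "d (Suc j)" r _ r]) auto
    also have "(U (Suc (Suc j)) * (U (Suc j))\<^sup>T) * (U (Suc j) * (S2 * R)) = U (Suc (Suc j)) * (S2 * R)"
      using Ua Ub S2 R j D2 by (intro cancel_UT[of _ "d (Suc (Suc j))" r _ "d (Suc j)" _ dx]) auto
    also have "U (Suc (Suc j)) * (S2 * R) = U (Suc (Suc j)) * S2 * R"
      using Ua Ub S2 R j D2 by (intro assoc_mult_mat[symmetric, of _ "d (Suc (Suc j))" r _ r]) auto
    finally show ?case by (simp add: mult.assoc mult.commute mult.left_commute)
  qed
qed

lemma dim_pos_of_orth:
  fixes Q :: "real mat"
  assumes "Q \<in> carrier_mat n r" "Q\<^sup>T * Q = 1\<^sub>m r" "r > 0"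
  shows "n > 0"
proof (rule ccontr)
  assume "\<not> n > 0" hence n0: "n = 0" by simp
  have "(Q\<^sup>T * Q) $$ (0,0) = (1::real)" unfolding assms(2) using assms(3) by simp
  moreover have "(Q\<^sup>T * Q) $$ (0,0) = row (Q\<^sup>T) 0 \<bullet> col Q 0" using assms(1,3) by simp
  moreover have "row (Q\<^sup>T) 0 \<bullet> col Q 0 = 0" using assms n0 by (simp add: scalar_prod_def)
  ultimately show False by simp
qed

lemma frob_pos_pd:
  assumes Sh: "pos_def_mat n Sh" and n: "n > 0"
  shows "frob Sh > 0"
proof -
  have ShC: "Sh \<in> carrier_mat n n"
    and pd: "\<forall>x \<in> carrier_vec n. x \<noteq> 0\<^sub>v n \<longrightarrow> x \<bullet> (Sh *\<^sub>v x) > 0" using Sh unfolding pos_def_mat_def by auto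
  have "frob Sh \<noteq> 0"
  proof
    assume f0: "frob Sh = 0"
    have "\<forall>i\<in>{..<n}. (\<Sum>j<n. (Sh$$(i,j))^2) = 0"
      using f0 ShC unfolding frob_def by (subst sum_nonneg_eq_0_iff[symmetric]) (auto intro: sum_nonneg)
    hence z: "Sh $$ (i,j) = 0" if "i < n" "j < n" for i j
      using that by (auto simp: sum_nonneg_eq_0_iff)
    define x :: "real vec" where "x = unit_vec n 0"
    have xc: "x \<in> carrier_vec n" unfolding x_def by simp
    have x0: "x $ 0 = 1" using n unfolding x_def by simp
    have xn: "x \<noteq> 0\<^sub>v n"
    proof
      assume "x = 0\<^sub>v n" hence "x $ 0 = 0" using n by simp
      thus False using x0 by simp
    qed
    have "Sh *\<^sub>v x = 0\<^sub>v n"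
    proof (rule eq_vecI)
      fix i assume i: "i < dim_vec (0\<^sub>v n :: real vec)"
      have "(Sh *\<^sub>v x) $ i = (\<Sum>j\<in>{0..<n}. Sh $$ (i,j) * x $ j)"
        using i ShC xc by (simp add: scalar_prod_def)
      also have "\<dots> = 0" using i z by (intro sum.neutral) simp
      finally show "(Sh *\<^sub>v x) $ i = 0\<^sub>v n $ i" using i by simp
    qed (use ShC in simp)
    note x = xc xn
    have "x \<bullet> (Sh *\<^sub>v x) = 0" using x \<open>Sh *\<^sub>v x = 0\<^sub>v n\<close> by simp
    thus False using pd x by auto
  qed
  thus ?thesis using frob_nonneg[of Sh] by simp
qed

lemma part3:
  fixes D dx dy r :: nat and V Sig Sh L S R :: "real mat"
  assumes D2: "D \<ge> 2"
    and V: "V \<in> carrier_mat dy dx"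
    and Sh_pd: "pos_def_mat dx Sh" and Sh_sq: "Sh * Sh = Sig"
    and L: "L \<in> carrier_mat dy r" and LL: "L\<^sup>T * L = 1\<^sub>m r"
    and R: "R \<in> carrier_mat r dx" and RR: "R * R\<^sup>T = 1\<^sub>m r"
    and S: "S \<in> carrier_mat r r" and S_diag: "diagonal_mat S"
    and S_pos: "\<forall>i<r. S $$ (i,i) > 0"
    and svd: "V * Sh = L * S * R"
    and d0: "d 0 = dx" and dD: "d D = dy" and dr: "\<forall>k\<le>D. r \<le> d k"
    and U: "\<forall>i\<in>{1..D-1}. U i \<in> carrier_mat (d i) r \<and> (U i)\<^sup>T * U i = 1\<^sub>m r"
    and Wc: "\<forall>k\<in>{1..D}. W k \<in> carrier_mat (d k) (d (k - 1))"
    and WD: "W D = (mtrace S powr (- (real D - 2) / (2 * real D)) * real dy powr ((real D - 1) / (2 * real D))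
                 * mtrace Sig powr (- 1 / (2 * real D))) \<cdot>\<^sub>m (L * diag_sqrt S * (U (D - 1))\<^sup>T)"
    and Wk: "\<forall>k\<in>{2..D-1}. W k = (mtrace S powr (1 / real D) * (real dy * mtrace Sig) powr (- 1 / (2 * real D)))
                 \<cdot>\<^sub>m (U k * (U (k - 1))\<^sup>T)"
    and W1: "W 1 * Sh = (mtrace S powr (- (real D - 2) / (2 * real D)) * real dy powr (- 1 / (2 * real D))
                 * mtrace Sig powr ((real D - 1) / (2 * real D))) \<cdot>\<^sub>m (U 1 * diag_sqrt S * R)"
  shows "feasible D dx dy r V W d \<and>
        Tobj D Sig W d = real D * rpow (mtrace S) (2 * (real D - 1) / real D)
                             * (real dy * mtrace Sig) powr (1 / real D)"
proof -
  define s where "s = mtrace S"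
  define y where "y = real dy"
  define \<sigma> where "\<sigma> = mtrace Sig"
  define cD where "cD = s powr (- (real D - 2) / (2 * real D)) * y powr ((real D - 1) / (2 * real D))
                 * \<sigma> powr (- 1 / (2 * real D))"
  define cm where "cm = s powr (1 / real D) * (y * \<sigma>) powr (- 1 / (2 * real D))"
  define c1 where "c1 = s powr (- (real D - 2) / (2 * real D)) * y powr (- 1 / (2 * real D))
                 * \<sigma> powr ((real D - 1) / (2 * real D))"
  define S2 where "S2 = diag_sqrt S"
  note S2p = diag_sqrt_props[OF S S_diag S_pos, folded S2_def]
  have Sh: "Sh \<in> carrier_mat dx dx" and ShT: "Sh\<^sup>T = Sh" using Sh_pd unfolding pos_def_mat_def by auto
  have WD': "W D = cD \<cdot>\<^sub>m (L * S2 * (U (D - 1))\<^sup>T)" using WD unfolding cD_def s_def y_def \<sigma>_def S2_def .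
  have Wk': "\<forall>k\<in>{2..D-1}. W k = cm \<cdot>\<^sub>m (U k * (U (k - 1))\<^sup>T)" using Wk unfolding cm_def s_def y_def \<sigma>_def .
  have W1': "W 1 * Sh = c1 \<cdot>\<^sub>m (U 1 * S2 * R)" using W1 unfolding c1_def s_def y_def \<sigma>_def S2_def .
  note keys = part3_keys[OF D2 L R S2p(1) d0 dD U Wc WD' Wk' W1' Sh]
  have Uf: "\<And>i. 1 \<le> i \<Longrightarrow> i \<le> D-1 \<Longrightarrow> U i \<in> carrier_mat (d i) r \<and> (U i)\<^sup>T * U i = 1\<^sub>m r"
    using U by auto
  have Wf: "\<And>k. 1 \<le> k \<Longrightarrow> k \<le> D \<Longrightarrow> W k \<in> carrier_mat (d k) (d (k-1))"
    using Wc by auto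
  have U1: "U 1 \<in> carrier_mat (d 1) r" "(U 1)\<^sup>T * U 1 = 1\<^sub>m r" using Uf[of 1] D2 by auto
  have W1c: "W 1 \<in> carrier_mat (d 1) dx" using Wf[of 1] D2 d0 by simp
  have A1: "chain W d 1 (D-1) = (cD * cm^(D-2)) \<cdot>\<^sub>m (L * S2 * (U 1)\<^sup>T)"
  proof -
    have e: "D-1-(D-2) = 1" "Suc (D-2) = D-1" using D2 by auto
    show ?thesis using keys(1)[of "D-2"] unfolding e by simp
  qed
  have chc: "\<forall>k\<in>{0+1..0+1+(D-1)}. W k \<in> carrier_mat (d k) (d (k-1))" using Wf D2 by auto
  have C1: "chain W d 1 (D-1) \<in> carrier_mat dy (d 1)"
  proof -
    have "\<forall>k\<in>{1+1..1+(D-1)}. W k \<in> carrier_mat (d k) (d (k-1))" using Wf D2 by auto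
    from chain_carrier[OF this] show ?thesis using dD D2 by simp
  qed
  have split: "chain W d 0 D = chain W d 1 (D-1) * W 1"
    using chain_split[OF chc] D2 by simp
  have CD: "chain W d 0 D \<in> carrier_mat dy dx" using C1 W1c split by simp
  have "chain W d 0 D * Sh = chain W d 1 (D-1) * (W 1 * Sh)"
    using split assoc_mult_mat[OF C1 W1c Sh] by simp
  also have "\<dots> = (cD * cm^(D-2) * c1) \<cdot>\<^sub>m ((L * S2 * (U 1)\<^sup>T) * (U 1 * S2 * R))"
    unfolding A1 W1' using L S2p(1) U1 R by (intro smult_mult_smult[of _ dy "d 1" _ dx]) auto
  also have "(L * S2 * (U 1)\<^sup>T) * (U 1 * S2 * R) = L * S * R"
  proof -
    have "U 1 * S2 * R = U 1 * (S2 * R)" using U1 S2p R by (intro assoc_mult_mat[of _ "d 1" r _ r]) auto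
    moreover have "(L * S2 * (U 1)\<^sup>T) * (U 1 * (S2 * R)) = (L * S2) * (S2 * R)"
      using L S2p U1 R by (intro cancel_UT[of _ dy r _ "d 1" _ dx]) auto
    moreover have "(L * S2) * (S2 * R) = L * (S2 * (S2 * R))" using L S2p R by (intro assoc_mult_mat[of _ dy r _ r]) auto
    moreover have "S2 * (S2 * R) = (S2 * S2) * R" using S2p R by (intro assoc_mult_mat[symmetric, of _ r r _ r]) auto
    moreover have "L * (S * R) = L * S * R" using L S R by (intro assoc_mult_mat[symmetric, of _ dy r _ r]) auto
    ultimately show ?thesis using S2p by simp
  qed
  finally have chSh: "chain W d 0 D * Sh = (cD * cm^(D-2) * c1) \<cdot>\<^sub>m (L * S * R)" .
  have pos: "s > 0 \<and> y > 0 \<and> \<sigma> > 0" if r0: "r > 0"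
  proof -
    have "s > 0" unfolding s_def mtrace_def using S S_pos r0 by (intro sum_pos) auto
    moreover have "dy > 0" using dim_pos_of_orth[OF L LL r0] .
    moreover have "dx > 0" using dim_pos_of_orth[of "R\<^sup>T" dx r] R RR r0 by simp
    moreover have "\<sigma> = frob Sh" unfolding \<sigma>_def using frob_tr2[OF Sh] ShT Sh_sq by simp
    ultimately show ?thesis using frob_pos_pd[OF Sh_pd] y_def by simp
  qed
  have eR: "\<forall>x u v. (exp x powr (- (real D - 2) / (2 * real D)) * exp u powr ((real D - 1) / (2 * real D))
                 * exp v powr (- 1 / (2 * real D))) * 
                 (exp x powr (1 / real D) * (exp u * exp v) powr (- 1 / (2 * real D)))^(D-2) *
                 (exp x powr (- (real D - 2) / (2 * real D)) * exp u powr (- 1 / (2 * real D))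
                 * exp v powr ((real D - 1) / (2 * real D))) = 1"
    using exp_terms(1)[OF D2] by blast
  have coef: "(cD * cm^(D-2) * c1) \<cdot>\<^sub>m (L * S * R) = L * S * R"
  proof (cases "r = 0")
    case True
    show ?thesis
    proof (rule eq_matI)
      fix i j assume ij: "i < dim_row (L * S * R)" "j < dim_col (L * S * R)"
      have "(L * S * R) $$ (i,j) = 0" using ij True L S R by (simp add: scalar_prod_def)
      then show "((cD * cm^(D-2) * c1) \<cdot>\<^sub>m (L * S * R)) $$ (i,j) = (L * S * R) $$ (i,j)" using ij by simp
    qed auto
  next
    case False
    with pos have p: "s > 0" "y > 0" "\<sigma> > 0" by auto
    have "cD * cm^(D-2) * c1 = 1"
      using eR[rule_format, where x="ln s" and u="ln y" and v="ln \<sigma>"] p unfolding cD_def cm_def c1_def by simp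
    then show ?thesis by (auto intro!: eq_matI)
  qed
  have "chain W d 0 D * Sh = V * Sh" using chSh coef svd by simp
  hence chV: "chain W d 0 D = V" using Sh_cancel[OF Sh_pd CD V] by simp
  have feas: "feasible D dx dy r V W d" unfolding feasible_def using d0 dD dr Wc chV by auto
  have s0: "r = 0 \<Longrightarrow> s = 0" unfolding s_def mtrace_def using S by simp
  have S2f: "frob S2 = s" using S2p(4) s_def by simp
  have fA: "frob (Amat D W d k) = (cD*cm^(D-1-k))^2 * s" if k: "1 \<le> k" "k \<le> D-1" for k
  proof -
    have e: "D-1-(D-1-k) = k" "Suc (D-1-k) = D-k" using k by auto
    have Am: "Amat D W d k = (cD*cm^(D-1-k)) \<cdot>\<^sub>m (L * S2 * (U k)\<^sup>T)"
      using keys(1)[of "D-1-k"] k unfolding e Amat_def by simp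
    have Uk: "U k \<in> carrier_mat (d k) r" "(U k)\<^sup>T * U k = 1\<^sub>m r" using Uf[of k] k by auto
    have "frob (L * S2 * (U k)\<^sup>T) = frob (L * S2)"
      using Uk L S2p by (intro frob_orth_right[of _ r "d k" _ dy]) auto
    also have "\<dots> = s" using frob_orth_left[OF L LL S2p(1)] S2f by simp
    finally show ?thesis unfolding Am frob_smult by simp
  qed
  have fB: "frob (Bmat W d k * Sh) = (cm^(k-2)*c1)^2 * s" if k: "2 \<le> k" "k \<le> D" for k
  proof -
    have e: "Suc (k-2) = k-1" using k by auto
    have Bm: "Bmat W d k * Sh = (cm^(k-2)*c1) \<cdot>\<^sub>m (U (k-1) * S2 * R)"
      using keys(2)[of "k-2"] k unfolding e Bmat_def by simp
    have Uk: "U (k-1) \<in> carrier_mat (d (k-1)) r" "(U (k-1))\<^sup>T * U (k-1) = 1\<^sub>m r" using Uf[of "k-1"] k by auto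
    have "frob (U (k-1) * S2 * R) = frob (U (k-1) * S2)"
      using Uk R RR S2p by (intro frob_orth_right[of _ r dx _ "d (k-1)"]) auto
    also have "\<dots> = s" using frob_orth_left[OF Uk S2p(1)] S2f by simp
    finally show ?thesis unfolding Bm frob_smult by simp
  qed
  have aD: "frob (Amat D W d D) = y" unfolding Amat_def y_def using dD by (simp add: frob_one)
  have b1: "frob (Bmat W d 1 * Sh) = \<sigma>" unfolding Bmat_def \<sigma>_def using d0 Sh ShT Sh_sq
    by (simp add: frob_tr2[OF Sh, symmetric])
  define E where "E = s powr (2 * (real D - 1) / real D) * (y * \<sigma>) powr (1 / real D)"
  have eT1: "\<forall>x u v. ((exp x powr (- (real D - 2) / (2 * real D)) * exp u powr ((real D - 1) / (2 * real D))
                 * exp v powr (- 1 / (2 * real D))) *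
                 (exp x powr (1 / real D) * (exp u * exp v) powr (- 1 / (2 * real D)))^(D-2))^2 * exp x * exp v
               = exp x powr (2 * (real D - 1) / real D) * (exp u * exp v) powr (1 / real D)"
    using exp_terms(2)[OF D2] by blast
  have eT2: "\<forall>x u v. exp u * (((exp x powr (1 / real D) * (exp u * exp v) powr (- 1 / (2 * real D)))^(D-2) *
                 (exp x powr (- (real D - 2) / (2 * real D)) * exp u powr (- 1 / (2 * real D))
                 * exp v powr ((real D - 1) / (2 * real D))))^2 * exp x)
               = exp x powr (2 * (real D - 1) / real D) * (exp u * exp v) powr (1 / real D)"
    using exp_terms(3)[OF D2] by blast
  have eT3: "\<forall>x u v. 2 \<le> k \<longrightarrow> k \<le> D - 1 \<longrightarrow> ((exp x powr (- (real D - 2) / (2 * real D)) * exp u powr ((real D - 1) / (2 * real D))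
                 * exp v powr (- 1 / (2 * real D))) *
                 (exp x powr (1 / real D) * (exp u * exp v) powr (- 1 / (2 * real D)))^(D-1-k))^2 * exp x *
              (((exp x powr (1 / real D) * (exp u * exp v) powr (- 1 / (2 * real D)))^(k-2) *
                 (exp x powr (- (real D - 2) / (2 * real D)) * exp u powr (- 1 / (2 * real D))
                 * exp v powr ((real D - 1) / (2 * real D))))^2 * exp x)
               = exp x powr (2 * (real D - 1) / real D) * (exp u * exp v) powr (1 / real D)" for k
    using exp_terms(4)[OF D2] by blast
  have termk: "frob (Amat D W d k) * frob (Bmat W d k * Sh) = (if r = 0 then 0 else E)"
    if k: "k \<in> {1..D}" for k
  proof (cases "k = 1")
    case True
    have "frob (Amat D W d k) * frob (Bmat W d k * Sh) = (cD*cm^(D-2))^2 * s * \<sigma>"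
      using fA[of 1] b1 True D2 by (simp add: numeral_2_eq_2)
    moreover have "r \<noteq> 0 \<Longrightarrow> (cD*cm^(D-2))^2 * s * \<sigma> = E"
      using eT1[rule_format, where x="ln s" and u="ln y" and v="ln \<sigma>"] pos unfolding cD_def cm_def E_def by simp
    ultimately show ?thesis using s0 by auto
  next
    case k1: False
    show ?thesis
    proof (cases "k = D")
      case True
      have "frob (Amat D W d k) * frob (Bmat W d k * Sh) = y * ((cm^(D-2)*c1)^2 * s)"
        using fB[of D] aD True D2 by simp
      moreover have "r \<noteq> 0 \<Longrightarrow> y * ((cm^(D-2)*c1)^2 * s) = E"
        using eT2[rule_format, where x="ln s" and u="ln y" and v="ln \<sigma>"] pos unfolding c1_def cm_def E_def by simp
      ultimately show ?thesis using s0 by auto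
    next
      case False
      hence kk: "2 \<le> k" "k \<le> D - 1" using k k1 by auto
      have "frob (Amat D W d k) * frob (Bmat W d k * Sh) = (cD*cm^(D-1-k))^2 * s * ((cm^(k-2)*c1)^2 * s)"
        using fA[of k] fB[of k] kk by simp
      moreover have "r \<noteq> 0 \<Longrightarrow> (cD*cm^(D-1-k))^2 * s * ((cm^(k-2)*c1)^2 * s) = E"
        using eT3[rule_format, where k=k and x="ln s" and u="ln y" and v="ln \<sigma>"] pos kk unfolding cD_def c1_def cm_def E_def by simp
      ultimately show ?thesis using s0 by auto
    qed
  qed
  have "Tobj D Sig W d = (\<Sum>k\<in>{1..D}. (if r = 0 then 0 else E))"
    unfolding Tobj_frob[OF feas Sh_pd Sh_sq] using termk by (intro sum.cong) auto
  also have "\<dots> = real D * rpow s (2 * (real D - 1) / real D) * (y * \<sigma>) powr (1 / real D)"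
  proof (cases "r = 0")
    case True
    have "2 * (real D - 1) / real D \<noteq> 0" using D2 by simp
    then show ?thesis using True s0 by (simp add: rpow_def)
  next
    case False
    have "2 * (real D - 1) / real D \<noteq> 0" using D2 by simp
    then show ?thesis using False by (simp add: rpow_def E_def)
  qed
  finally show ?thesis using feas unfolding s_def y_def \<sigma>_def by simp
qed

definition emb :: "nat \<Rightarrow> nat \<Rightarrow> real mat" where
  "emb n r = mat n r (\<lambda>(a,b). if a = b then 1 else 0)"

lemma emb_props:
  assumes "r \<le> n"
  shows "emb n r \<in> carrier_mat n r" "(emb n r)\<^sup>T * emb n r = 1\<^sub>m r"
proof -
  show "emb n r \<in> carrier_mat n r" by (simp add: emb_def)
  show "(emb n r)\<^sup>T * emb n r = 1\<^sub>m r"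
  proof (rule eq_matI)
    fix a b assume ab: "a < dim_row (1\<^sub>m r :: real mat)" "b < dim_col (1\<^sub>m r :: real mat)"
    have "((emb n r)\<^sup>T * emb n r) $$ (a,b) = (\<Sum>k\<in>{0..<n}. (if k = a then 1 else 0) * (if k = b then 1 else 0))"
      using ab by (simp add: emb_def scalar_prod_def)
    also have "\<dots> = (if a = b then 1 else 0)" using ab assms
      by (auto simp: if_distrib[of "\<lambda>x. x * _"] cong: if_cong)
    finally show "((emb n r)\<^sup>T * emb n r) $$ (a,b) = (1\<^sub>m r :: real mat) $$ (a,b)" using ab by simp
  qed (auto simp: emb_def)
qed

definition diag_isqrt :: "real mat \<Rightarrow> real mat" where
  "diag_isqrt S = mat (dim_row S) (dim_col S) (\<lambda>(i,j). if i = j then 1 / sqrt (S $$ (i,i)) else 0)"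

lemma diag_isqrt_props:
  assumes S: "S \<in> carrier_mat r r" and Sd: "diagonal_mat S" and Sp: "\<forall>i<r. S $$ (i,i) > 0"
  shows "diag_isqrt S \<in> carrier_mat r r" "diag_isqrt S * S = diag_sqrt S"
proof -
  show "diag_isqrt S \<in> carrier_mat r r" using S by (simp add: diag_isqrt_def)
  show "diag_isqrt S * S = diag_sqrt S"
  proof (rule eq_matI)
    fix i j assume ij: "i < dim_row (diag_sqrt S)" "j < dim_col (diag_sqrt S)"
    have ij': "i < r" "j < r" using ij S by (auto simp: diag_sqrt_def)
    have "(diag_isqrt S * S) $$ (i,j) = (\<Sum>k\<in>{0..<r}. (if i = k then 1 / sqrt (S$$(i,i)) else 0) * S $$ (k,j))"
      using S ij' by (simp add: diag_isqrt_def scalar_prod_def)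
    also have "\<dots> = S $$ (i,j) / sqrt (S$$(i,i))" using ij'
      by (simp add: if_distrib[of "\<lambda>x. x * _"] cong: if_cong)
    also have "\<dots> = (if i = j then sqrt (S $$ (i,i)) else 0)"
    proof (cases "i = j")
      case True
      have "S $$ (i,i) > 0" using Sp ij' by auto
      then show ?thesis using True by (simp add: real_div_sqrt)
    next
      case False then show ?thesis using Sd ij' S unfolding diagonal_mat_def by auto
    qed
    also have "\<dots> = diag_sqrt S $$ (i,j)" using ij' S by (simp add: diag_sqrt_def)
    finally show "(diag_isqrt S * S) $$ (i,j) = diag_sqrt S $$ (i,j)" .
  qed (use S in \<open>auto simp: diag_isqrt_def diag_sqrt_def\<close>)
qed

lemma part2:
  fixes D dx dy r :: nat and V Sig Sh L S R :: "real mat"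
  assumes D1: "D \<ge> 1"
    and V: "V \<in> carrier_mat dy dx"
    and Sh_pd: "pos_def_mat dx Sh" and Sh_sq: "Sh * Sh = Sig"
    and L: "L \<in> carrier_mat dy r" and LL: "L\<^sup>T * L = 1\<^sub>m r"
    and R: "R \<in> carrier_mat r dx" and RR: "R * R\<^sup>T = 1\<^sub>m r"
    and S: "S \<in> carrier_mat r r" and S_diag: "diagonal_mat S"
    and S_pos: "\<forall>i<r. S $$ (i,i) > 0"
    and svd: "V * Sh = L * S * R"
    and d0: "d 0 = dx" and dD: "d D = dy" and dr: "\<forall>k\<le>D. r \<le> d k"
  shows "\<exists>W. feasible D dx dy r V W d \<and>
           Tobj D Sig W d = real D * rpow (mtrace S) (2 * (real D - 1) / real D)
                             * (real dy * mtrace Sig) powr (1 / real D)"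
proof (cases "D = 1")
  case True
  have Sh: "Sh \<in> carrier_mat dx dx" and ShT: "Sh\<^sup>T = Sh" using Sh_pd unfolding pos_def_mat_def by auto
  define W where "W = (\<lambda>k::nat. V)"
  have feas: "feasible D dx dy r V W d" unfolding feasible_def W_def using True d0 dD dr V by auto
  have "Tobj D Sig W d = frob (Amat D W d 1) * frob (Bmat W d 1 * Sh)"
    using Tobj_frob[OF feas Sh_pd Sh_sq] True by simp
  also have "\<dots> = real dy * mtrace Sig" unfolding Amat_def Bmat_def using True dD d0 Sh ShT Sh_sq
    by (simp add: frob_one frob_tr2[OF Sh, symmetric])
  also have "\<dots> = real D * rpow (mtrace S) (2 * (real D - 1) / real D) * (real dy * mtrace Sig) powr (1 / real D)"
  proof -
    have "mtrace Sig = frob Sh" using frob_tr2[OF Sh] ShT Sh_sq by simp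
    hence "real dy * mtrace Sig \<ge> 0" using frob_nonneg[of Sh] by simp
    then show ?thesis using True by (simp add: rpow_def)
  qed
  finally show ?thesis using feas by blast
next
  case False
  hence D2: "D \<ge> 2" using D1 by auto
  have Sh: "Sh \<in> carrier_mat dx dx" using Sh_pd unfolding pos_def_mat_def by auto
  define cD where "cD = mtrace S powr (- (real D - 2) / (2 * real D)) * real dy powr ((real D - 1) / (2 * real D))
                 * mtrace Sig powr (- 1 / (2 * real D))"
  define cm where "cm = mtrace S powr (1 / real D) * (real dy * mtrace Sig) powr (- 1 / (2 * real D))"
  define c1 where "c1 = mtrace S powr (- (real D - 2) / (2 * real D)) * real dy powr (- 1 / (2 * real D))
                 * mtrace Sig powr ((real D - 1) / (2 * real D))"
  define U where "U i = emb (d i) r" for i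
  define Si where "Si = diag_isqrt S"
  define S2 where "S2 = diag_sqrt S"
  note S2p = diag_sqrt_props[OF S S_diag S_pos, folded S2_def]
  note Sip = diag_isqrt_props[OF S S_diag S_pos, folded S2_def Si_def]
  define W where "W k = (if k = D then cD \<cdot>\<^sub>m (L * diag_sqrt S * (U (D - 1))\<^sup>T)
      else if k = 1 then c1 \<cdot>\<^sub>m (U 1 * Si * L\<^sup>T * V)
      else cm \<cdot>\<^sub>m (U k * (U (k - 1))\<^sup>T))" for k
  have Uc: "U i \<in> carrier_mat (d i) r" "(U i)\<^sup>T * U i = 1\<^sub>m r" if "i \<le> D" for i
    using emb_props[of r "d i"] dr that unfolding U_def by auto
  have U: "\<forall>i\<in>{1..D-1}. U i \<in> carrier_mat (d i) r \<and> (U i)\<^sup>T * U i = 1\<^sub>m r" using Uc by auto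
  have Wc: "\<forall>k\<in>{1..D}. W k \<in> carrier_mat (d k) (d (k - 1))"
  proof
    fix k assume k: "k \<in> {1..D}"
    show "W k \<in> carrier_mat (d k) (d (k - 1))"
    proof (cases "k = D")
      case True then show ?thesis unfolding W_def using Uc[of "D-1"] L S2p dD by (simp add: S2_def)
    next
      case kD: False
      show ?thesis
      proof (cases "k = 1")
        case True
        have "U 1 * Si * L\<^sup>T * V \<in> carrier_mat (d 1) dx"
          using Uc[of 1] L Sip V D2
          by (intro mult_carrier_mat[of _ _ dy] mult_carrier_mat[of _ _ r]) auto
        then show ?thesis unfolding W_def using kD True d0 by simp
      next
        case False
        have "k \<le> D" "k - 1 \<le> D" using k by auto
        then show ?thesis unfolding W_def using kD False Uc[of k] Uc[of "k-1"] by simp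
      qed
    qed
  qed
  have WD: "W D = cD \<cdot>\<^sub>m (L * diag_sqrt S * (U (D - 1))\<^sup>T)" unfolding W_def by simp
  have Wk: "\<forall>k\<in>{2..D-1}. W k = cm \<cdot>\<^sub>m (U k * (U (k - 1))\<^sup>T)" unfolding W_def by auto
  have W1: "W 1 * Sh = c1 \<cdot>\<^sub>m (U 1 * diag_sqrt S * R)"
  proof -
    have U1: "U 1 \<in> carrier_mat (d 1) r" using Uc[of 1] D2 by auto
    have X: "U 1 * Si \<in> carrier_mat (d 1) r" using U1 Sip by auto
    have M: "U 1 * Si * L\<^sup>T * V \<in> carrier_mat (d 1) dx"
      using U1 L Sip V by (intro mult_carrier_mat[of _ _ dy] mult_carrier_mat[of _ _ r]) auto
    have W1e: "W 1 = c1 \<cdot>\<^sub>m (U 1 * Si * L\<^sup>T * V)" unfolding W_def using D2 by simp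
    have "W 1 * Sh = c1 \<cdot>\<^sub>m ((U 1 * Si * L\<^sup>T * V) * Sh)"
      unfolding W1e by (rule mult_smult_assoc_mat[OF M Sh])
    also have "(U 1 * Si * L\<^sup>T * V) * Sh = (U 1 * Si * L\<^sup>T) * (V * Sh)"
      using X L V Sh by (intro assoc_mult_mat[of _ "d 1" dy _ dx]) auto
    also have "\<dots> = (U 1 * Si) * (L\<^sup>T * (L * (S * R)))"
    proof -
      have "L * S * R = L * (S * R)" using L S R by (intro assoc_mult_mat[of _ dy r _ r]) auto
      moreover have "(U 1 * Si * L\<^sup>T) * (L * (S * R)) = (U 1 * Si) * (L\<^sup>T * (L * (S * R)))"
        using X L S R by (intro assoc_mult_mat[of _ "d 1" r _ dy]) auto
      ultimately show ?thesis using svd by simp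
    qed
    also have "L\<^sup>T * (L * (S * R)) = S * R"
    proof -
      have "L\<^sup>T * (L * (S * R)) = (L\<^sup>T * L) * (S * R)" using L S R by (intro assoc_mult_mat[symmetric, of _ r dy _ r]) auto
      then show ?thesis using LL S R by simp
    qed
    also have "(U 1 * Si) * (S * R) = U 1 * ((Si * S) * R)"
    proof -
      have "(U 1 * Si) * (S * R) = U 1 * (Si * (S * R))" using U1 Sip S R by (intro assoc_mult_mat[of _ "d 1" r _ r]) auto
      moreover have "Si * (S * R) = (Si * S) * R" using Sip S R by (intro assoc_mult_mat[symmetric, of _ r r _ r]) auto
      ultimately show ?thesis by simp
    qed
    also have "U 1 * ((Si * S) * R) = U 1 * diag_sqrt S * R"
    proof -
      have "U 1 * (diag_sqrt S * R) = U 1 * diag_sqrt S * R"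
        using U1 S2p R unfolding S2_def by (intro assoc_mult_mat[symmetric, of _ "d 1" r _ r]) auto
      then show ?thesis using Sip(2) unfolding S2_def by simp
    qed
    finally show ?thesis .
  qed
  have "feasible D dx dy r V W d \<and>
        Tobj D Sig W d = real D * rpow (mtrace S) (2 * (real D - 1) / real D)
                             * (real dy * mtrace Sig) powr (1 / real D)"
    by (rule part3[OF D2 V Sh_pd Sh_sq L LL R RR S S_diag S_pos svd d0 dD dr U Wc
          WD[unfolded cD_def] Wk[unfolded cm_def] W1[unfolded c1_def]])
  then show ?thesis by blast
qed

theorem lemma4:
  fixes D dx dy r :: nat and V Sig Sh L S R :: "real mat"
  assumes D1: "D \<ge> 1"
    and V: "V \<in> carrier_mat dy dx"
    and Sig_pd: "pos_def_mat dx Sig"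
    and Sh_pd: "pos_def_mat dx Sh" and Sh_sq: "Sh * Sh = Sig"
    and L: "L \<in> carrier_mat dy r" and LL: "L\<^sup>T * L = 1\<^sub>m r"
    and R: "R \<in> carrier_mat r dx" and RR: "R * R\<^sup>T = 1\<^sub>m r"
    and S: "S \<in> carrier_mat r r" and S_diag: "diagonal_mat S"
    and S_pos: "\<forall>i<r. S $$ (i,i) > 0"
    and svd: "V * Sh = L * S * R"
    and rank: "vec_space.rank dy (V * Sh) = r"
  shows
    "(\<forall>W d. feasible D dx dy r V W d \<longrightarrow>
        Tobj D Sig W d \<ge> real D * rpow (mtrace S) (2 * (real D - 1) / real D)
                             * (real dy * mtrace Sig) powr (1 / real D))
     \<and> (\<forall>d. d 0 = dx \<longrightarrow> d D = dy \<longrightarrow> (\<forall>k\<le>D. r \<le> d k) \<longrightarrow>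
        (\<exists>W. feasible D dx dy r V W d \<and>
           Tobj D Sig W d = real D * rpow (mtrace S) (2 * (real D - 1) / real D)
                             * (real dy * mtrace Sig) powr (1 / real D)))
     \<and> (\<forall>W d U. D \<ge> 2 \<longrightarrow> d 0 = dx \<longrightarrow> d D = dy \<longrightarrow> (\<forall>k\<le>D. r \<le> d k) \<longrightarrow>
        (\<forall>i\<in>{1..D-1}. U i \<in> carrier_mat (d i) r \<and> (U i)\<^sup>T * U i = 1\<^sub>m r) \<longrightarrow>
        (\<forall>k\<in>{1..D}. W k \<in> carrier_mat (d k) (d (k - 1))) \<longrightarrow>
        W D = (mtrace S powr (- (real D - 2) / (2 * real D)) * real dy powr ((real D - 1) / (2 * real D))
                 * mtrace Sig powr (- 1 / (2 * real D))) \<cdot>\<^sub>m (L * diag_sqrt S * (U (D - 1))\<^sup>T) \<longrightarrow>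
        (\<forall>k\<in>{2..D-1}. W k = (mtrace S powr (1 / real D) * (real dy * mtrace Sig) powr (- 1 / (2 * real D)))
                 \<cdot>\<^sub>m (U k * (U (k - 1))\<^sup>T)) \<longrightarrow>
        W 1 * Sh = (mtrace S powr (- (real D - 2) / (2 * real D)) * real dy powr (- 1 / (2 * real D))
                 * mtrace Sig powr ((real D - 1) / (2 * real D))) \<cdot>\<^sub>m (U 1 * diag_sqrt S * R) \<longrightarrow>
        feasible D dx dy r V W d \<and>
        Tobj D Sig W d = real D * rpow (mtrace S) (2 * (real D - 1) / real D)
                             * (real dy * mtrace Sig) powr (1 / real D))"
  proof -
  show ?thesis
    apply (intro conjI)
    subgoal using part1[OF D1 Sh_pd Sh_sq L LL R RR S S_pos svd] by blast
    subgoal using part2[OF D1 V Sh_pd Sh_sq L LL R RR S S_diag S_pos svd] by blast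
    subgoal
      apply (intro allI impI)
      apply (rule part3[OF _ V Sh_pd Sh_sq L LL R RR S S_diag S_pos svd])
      apply assumption+
      done
    done
qed

end
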